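(* Let $R$ be a complete discrete valuation ring of characteristic $p>0$ with uniformizer $\pi$, field of fractions $K$, and normalized valuation $v_K$. Let $H$ be a primitively generated $K$-Hopf algebra of rank $p^2$, $t_1,t_2$ a $K$-basis of $\mathrm{Prim}(H)$ with associated matrix $B$. Let \[\Theta=\begin{pmatrix}\pi^i&0\\ \theta&\pi^j\end{pmatrix},\qquad i,j\in\mathbb{Z},\ \theta\in K,\ v_K(\theta)\le j,\] satisfy $\Theta^{-1}B\Theta^{(p)}\in M_2(R)$. Then the Hopf order corresponding to $\Theta$ (the image in $H$ of the $R$-Hopf algebra $R[u_1,u_2]/(u_i^p-\sum_j a_{j,i}u_j)$, $u_i$ primitive, $(a_{j,i})=\Theta^{-1}B\Theta^{(p)}$, under $u_i\mapsto\sum_j\theta_{j,i}t_j$) is \[H_{i,j,\theta}=R[\pi^it_1+\theta t_2,\ \pi^jt_2]\subseteq H.\] Moreover, if $\theta'\in K$ with $v_K(\theta')\le j$ also satisfies that $\begin{pmatrix}\pi^i&0\\ \theta'&\pi^j\end{pmatrix}^{-1}B\begin{pmatrix}\pi^i&0\\ \theta'&\pi^j\end{pmatrix}^{(p)}\in M_2(R)$, then $H_{i,j,\theta}=H_{i,j,\theta'}$ if and only if $v_K(\theta-\theta')\ge j$.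
   Context: $\Theta^{(p)}$ denotes the matrix obtained by raising each entry of $\Theta=(\theta_{j,i})$ to the $p$-th power. $t$ is primitive if $\Delta(t)=t\otimes1+1\otimes t$; $\mathrm{Prim}(H)$ is the module of primitives; $H$ is primitively generated if generated as an algebra by its primitives. The associated matrix $B=(b_{j,i})$ is defined by $t_i^p=\sum_j b_{j,i}t_j$. An $R$-Hopf order in $H$ is a finitely generated projective $R$-submodule which is an $R$-Hopf algebra under the inherited operations and spans $H$ over $K$. *)

theory Defs
  imports Main "HOL-Library.Extended_Real" "HOL-Computational_Algebra.Primes"
begin

definition normalized_discrete_valuation :: "('k::field \<Rightarrow> ereal) \<Rightarrow> 'k \<Rightarrow> bool" where
  "normalized_discrete_valuation v \<pi> \<longleftrightarrow>
     (\<forall>x. v x = \<infinity> \<longleftrightarrow> x = 0) \<and>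
     (\<forall>x. x \<noteq> 0 \<longrightarrow> (\<exists>n::int. v x = ereal (of_int n))) \<and>
     (\<forall>x y. v (x * y) = v x + v y) \<and>
     (\<forall>x y. min (v x) (v y) \<le> v (x + y)) \<and>
     v \<pi> = 1"

definition valuation_complete :: "('k::field \<Rightarrow> ereal) \<Rightarrow> bool" where
  "valuation_complete v \<longleftrightarrow>
     (\<forall>X::nat \<Rightarrow> 'k.
        (\<forall>M::int. \<exists>N. \<forall>m\<ge>N. \<forall>n\<ge>N. ereal (of_int M) \<le> v (X m - X n)) \<longrightarrow>
        (\<exists>L. \<forall>M::int. \<exists>N. \<forall>n\<ge>N. ereal (of_int M) \<le> v (X n - L)))"

definition complete_dvf_char :: "nat \<Rightarrow> ('k::field \<Rightarrow> ereal) \<Rightarrow> 'k \<Rightarrow> bool" where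
  "complete_dvf_char p v \<pi> \<longleftrightarrow>
     prime p \<and> of_nat p = (0::'k) \<and> normalized_discrete_valuation v \<pi> \<and> valuation_complete v"

definition val_ring :: "('k::field \<Rightarrow> ereal) \<Rightarrow> 'k set" where
  "val_ring v = {x. 0 \<le> v x}"

type_synonym 'a mat2 = "nat \<Rightarrow> nat \<Rightarrow> 'a"

definition mmult2 :: "'a::comm_ring_1 mat2 \<Rightarrow> 'a mat2 \<Rightarrow> 'a mat2" where
  "mmult2 A C = (\<lambda>r c. \<Sum>k\<in>{1,2}. A r k * C k c)"

definition det2 :: "'a::comm_ring_1 mat2 \<Rightarrow> 'a" where
  "det2 A = A 1 1 * A 2 2 - A 1 2 * A 2 1"

definition inv2 :: "'a::field mat2 \<Rightarrow> 'a mat2" where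
  "inv2 A = (\<lambda>r c.
     (if r = 1 \<and> c = 1 then A 2 2
      else if r = 1 \<and> c = 2 then - A 1 2
      else if r = 2 \<and> c = 1 then - A 2 1
      else if r = 2 \<and> c = 2 then A 1 1 else 0) / det2 A)"

definition entry_pow2 :: "'a::comm_ring_1 mat2 \<Rightarrow> nat \<Rightarrow> 'a mat2" where
  "entry_pow2 A p = (\<lambda>r c. (A r c) ^ p)"

definition in_M2 :: "'a set \<Rightarrow> 'a mat2 \<Rightarrow> bool" where
  "in_M2 S A \<longleftrightarrow> (\<forall>r\<in>{1,2}. \<forall>c\<in>{1,2}. A r c \<in> S)"

definition theta_mat :: "'k::field \<Rightarrow> int \<Rightarrow> int \<Rightarrow> 'k \<Rightarrow> 'k mat2" where
  "theta_mat \<pi> i j \<theta> = (\<lambda>r c.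
     if r = 1 \<and> c = 1 then \<pi> powi i
     else if r = 2 \<and> c = 1 then \<theta>
     else if r = 2 \<and> c = 2 then \<pi> powi j
     else 0)"

definition twisted_mat :: "nat \<Rightarrow> 'k::field mat2 \<Rightarrow> 'k mat2 \<Rightarrow> 'k mat2" where
  "twisted_mat p B \<Theta> = mmult2 (inv2 \<Theta>) (mmult2 B (entry_pow2 \<Theta> p))"

text \<open>The (commutative) K-algebra H is a commutative ring 'h together with a ring
homomorphism kappa : K -> H (scalars). The data of a primitively generated K-Hopf algebra
of rank p^2 with K-basis t 1, t 2 of Prim(H) and associated matrix B is recorded as:
the monomials t1^a t2^b (a,b<p) form a K-basis of H, and t_i^p = sum_j b_{j,i} t_j.\<close>

definition scalar_hom :: "('k::field \<Rightarrow> 'h::comm_ring_1) \<Rightarrow> bool" where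
  "scalar_hom \<kappa> \<longleftrightarrow> \<kappa> 1 = 1 \<and> (\<forall>x y. \<kappa> (x + y) = \<kappa> x + \<kappa> y) \<and> (\<forall>x y. \<kappa> (x * y) = \<kappa> x * \<kappa> y)"

definition prim_gen_rank_p2 ::
  "nat \<Rightarrow> ('k::field \<Rightarrow> 'h::comm_ring_1) \<Rightarrow> (nat \<Rightarrow> 'h) \<Rightarrow> 'k mat2 \<Rightarrow> bool" where
  "prim_gen_rank_p2 p \<kappa> t B \<longleftrightarrow>
     scalar_hom \<kappa> \<and>
     (\<forall>h. \<exists>!c :: nat \<Rightarrow> nat \<Rightarrow> 'k.
          (\<forall>a b. (p \<le> a \<or> p \<le> b) \<longrightarrow> c a b = 0) \<and>
          h = (\<Sum>a<p. \<Sum>b<p. \<kappa> (c a b) * t 1 ^ a * t 2 ^ b)) \<and>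
     (\<forall>i\<in>{1,2}. t i ^ p = (\<Sum>j\<in>{1,2}. \<kappa> (B j i) * t j))"

inductive_set R_subalg :: "('k::field \<Rightarrow> ereal) \<Rightarrow> ('k \<Rightarrow> 'h::comm_ring_1) \<Rightarrow> 'h set \<Rightarrow> 'h set"
  for v \<kappa> S where
    scal: "r \<in> val_ring v \<Longrightarrow> \<kappa> r \<in> R_subalg v \<kappa> S"
  | gen: "x \<in> S \<Longrightarrow> x \<in> R_subalg v \<kappa> S"
  | add: "x \<in> R_subalg v \<kappa> S \<Longrightarrow> y \<in> R_subalg v \<kappa> S \<Longrightarrow> x + y \<in> R_subalg v \<kappa> S"
  | mult: "x \<in> R_subalg v \<kappa> S \<Longrightarrow> y \<in> R_subalg v \<kappa> S \<Longrightarrow> x * y \<in> R_subalg v \<kappa> S"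

definition col_image :: "('k::field \<Rightarrow> 'h::comm_ring_1) \<Rightarrow> (nat \<Rightarrow> 'h) \<Rightarrow> 'k mat2 \<Rightarrow> nat \<Rightarrow> 'h" where
  "col_image \<kappa> t \<Theta> i = (\<Sum>j\<in>{1,2}. \<kappa> (\<Theta> j i) * t j)"

text \<open>The Hopf order corresponding to Theta: the image in H of R[u1,u2]/(u_i^p - sum_j a_{j,i} u_j).\<close>
definition hopf_order_of :: "('k::field \<Rightarrow> ereal) \<Rightarrow> ('k \<Rightarrow> 'h::comm_ring_1) \<Rightarrow> (nat \<Rightarrow> 'h) \<Rightarrow> 'k mat2 \<Rightarrow> 'h set" where
  "hopf_order_of v \<kappa> t \<Theta> = R_subalg v \<kappa> {col_image \<kappa> t \<Theta> 1, col_image \<kappa> t \<Theta> 2}"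

definition H_ijt :: "('k::field \<Rightarrow> ereal) \<Rightarrow> ('k \<Rightarrow> 'h::comm_ring_1) \<Rightarrow> (nat \<Rightarrow> 'h) \<Rightarrow> 'k \<Rightarrow> int \<Rightarrow> int \<Rightarrow> 'k \<Rightarrow> 'h set" where
  "H_ijt v \<kappa> t \<pi> i j \<theta> = R_subalg v \<kappa> {\<kappa> (\<pi> powi i) * t 1 + \<kappa> \<theta> * t 2, \<kappa> (\<pi> powi j) * t 2}"

end

theory Submission
  imports Defs
begin


lemma frob:
  fixes u w :: "'h::comm_ring_1"
  assumes p: "prime p" and c: "of_nat p = (0::'h)"
  shows "(u + w) ^ p = u ^ p + w ^ p"
proof -
  have p0: "p \<noteq> 0" using p by auto
  have mid: "of_nat (p choose k) * u ^ k * w ^ (p - k) = 0" if "k \<in> {1..<p}" for k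
  proof -
    have "p dvd (p choose k)" using dvd_choose_prime[of k p] that p p0 by auto
    then obtain m where "p choose k = p * m" by blast
    then have "(of_nat (p choose k) :: 'h) = 0" using c by simp
    then show ?thesis by simp
  qed
  have "{..p} = insert 0 (insert p {1..<p})" using p0 by auto
  then have "(u + w) ^ p = (\<Sum>k\<in>insert 0 (insert p {1..<p}). of_nat (p choose k) * u ^ k * w ^ (p - k))"
    by (simp add: binomial_ring)
  also have "\<dots> = w ^ p + u ^ p"
    using p0 mid by (simp add: sum.neutral)
  finally show ?thesis by simp
qed

context
  fixes \<kappa> :: "'k::field \<Rightarrow> 'h::comm_ring_1"
  assumes sh: "scalar_hom \<kappa>"
begin

lemma k_add: "\<kappa> (x + y) = \<kappa> x + \<kappa> y" using sh unfolding scalar_hom_def by blast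
lemma k_mult: "\<kappa> (x * y) = \<kappa> x * \<kappa> y" using sh unfolding scalar_hom_def by blast
lemma k_one: "\<kappa> 1 = 1" using sh unfolding scalar_hom_def by blast
lemma k_zero: "\<kappa> 0 = 0"
proof -
  have "\<kappa> (0 + 0) = \<kappa> 0 + \<kappa> 0" by (rule k_add)
  then show ?thesis by simp
qed
lemma k_neg: "\<kappa> (- x) = - \<kappa> x"
proof -
  have "\<kappa> (x + - x) = \<kappa> x + \<kappa> (- x)" by (rule k_add)
  then show ?thesis by (simp add: k_zero eq_neg_iff_add_eq_0 add.commute)
qed
lemma k_diff: "\<kappa> (x - y) = \<kappa> x - \<kappa> y"
  using k_add[of x "- y"] k_neg[of y] by simp
lemma k_pow: "\<kappa> (x ^ n) = \<kappa> x ^ n"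
  by (induction n) (simp_all add: k_one k_mult)
lemma k_of_nat: "\<kappa> (of_nat n) = of_nat n"
  by (induction n) (simp_all add: k_zero k_one k_add)
lemma k_sum: "\<kappa> (sum f A) = (\<Sum>a\<in>A. \<kappa> (f a))"
  by (induction A rule: infinite_finite_induct) (simp_all add: k_zero k_add)

end



context
  fixes v :: "'k::field \<Rightarrow> ereal" and \<pi> :: 'k
  assumes nv: "normalized_discrete_valuation v \<pi>"
begin

lemma v_mult: "v (x * y) = v x + v y" using nv unfolding normalized_discrete_valuation_def by blast
lemma v_add: "min (v x) (v y) \<le> v (x + y)" using nv unfolding normalized_discrete_valuation_def by blast
lemma v_inf: "v x = \<infinity> \<longleftrightarrow> x = 0" using nv unfolding normalized_discrete_valuation_def by blast
lemma v_int: "x \<noteq> 0 \<Longrightarrow> \<exists>n::int. v x = ereal (of_int n)" using nv unfolding normalized_discrete_valuation_def by blast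
lemma v_pi: "v \<pi> = 1" using nv unfolding normalized_discrete_valuation_def by blast
lemma pi_nz: "\<pi> \<noteq> 0" using v_pi v_inf[of \<pi>] by (auto simp: one_ereal_def)

lemma v_one: "v 1 = 0"
proof -
  obtain n :: int where n: "v 1 = ereal n" using v_int[of 1] by auto
  have "v 1 = v 1 + v 1" using v_mult[of 1 1] by simp
  with n show ?thesis by (simp add: zero_ereal_def)
qed

lemma v_neg1: "v (-1) = 0"
proof -
  obtain n :: int where n: "v (-1) = ereal n" using v_int[of "-1"] by auto
  have "v 1 = v (-1) + v (-1)" using v_mult[of "-1" "-1"] by simp
  with n v_one show ?thesis by (simp add: zero_ereal_def)
qed

lemma v_neg: "v (- x) = v x"
  using v_mult[of "-1" x] v_neg1 by simp

lemma v_inverse: "x \<noteq> 0 \<Longrightarrow> v (inverse x) = - v x"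
proof -
  assume x: "x \<noteq> 0"
  obtain n :: int where n: "v x = ereal n" using v_int[OF x] by auto
  have "v 1 = v x + v (inverse x)" using v_mult[of x "inverse x"] x by simp
  then have "0 = ereal n + v (inverse x)" using n v_one by simp
  then show ?thesis using n by (cases "v (inverse x)") (auto simp: zero_ereal_def)
qed

lemma v_pow: "v (\<pi> ^ n) = ereal (of_nat n)"
proof (induction n)
  case 0 then show ?case by (simp add: v_one zero_ereal_def)
next
  case (Suc n) then show ?case using v_mult[of \<pi> "\<pi>^n"] v_pi by (simp add: one_ereal_def)
qed

lemma v_powi: "v (\<pi> powi j) = ereal (of_int j)"
proof (cases "j \<ge> 0")
  case True
  then have "\<pi> powi j = \<pi> ^ nat j" by (simp add: power_int_def power_inverse)
  then show ?thesis using v_pow[of "nat j"] True by simp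
next
  case False
  then have "\<pi> powi j = inverse (\<pi> ^ nat (- j))" by (simp add: power_int_def power_inverse)
  then show ?thesis using v_pow[of "nat (-j)"] False v_inverse[of "\<pi> ^ nat (-j)"] pi_nz by simp
qed

lemma powi_nz: "\<pi> powi j \<noteq> 0" using pi_nz by simp

lemma R_add: "x \<in> val_ring v \<Longrightarrow> y \<in> val_ring v \<Longrightarrow> x + y \<in> val_ring v"
  using v_add[of x y] unfolding val_ring_def by (auto simp: min_def split: if_splits)
lemma R_mult: "x \<in> val_ring v \<Longrightarrow> y \<in> val_ring v \<Longrightarrow> x * y \<in> val_ring v"
  using v_mult[of x y] unfolding val_ring_def by simp
lemma R_neg: "x \<in> val_ring v \<Longrightarrow> - x \<in> val_ring v"
  using v_neg[of x] unfolding val_ring_def by simp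
lemma R_zero: "0 \<in> val_ring v" using v_inf[of 0] unfolding val_ring_def by simp
lemma R_one: "1 \<in> val_ring v" using v_one unfolding val_ring_def by simp
lemma R_diff: "x \<in> val_ring v \<Longrightarrow> y \<in> val_ring v \<Longrightarrow> x - y \<in> val_ring v"
  using R_add[of x "- y"] R_neg[of y] by simp

lemma v_scale_pow: "v (d * \<pi> powi j) = v d + ereal (of_int j)"
  using v_mult v_powi by simp

lemma ge_iff: "ereal (of_int j) \<le> v (d * \<pi> powi j) \<longleftrightarrow> d \<in> val_ring v"
  unfolding v_scale_pow val_ring_def by (cases "v d") auto

end


definition supp :: "nat \<Rightarrow> (nat \<Rightarrow> nat \<Rightarrow> 'k::zero) \<Rightarrow> bool" where
  "supp p c \<longleftrightarrow> (\<forall>a b. (p \<le> a \<or> p \<le> b) \<longrightarrow> c a b = 0)"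

definition Sm :: "nat \<Rightarrow> ('k \<Rightarrow> 'h::comm_ring_1) \<Rightarrow> 'h \<Rightarrow> 'h \<Rightarrow> (nat \<Rightarrow> nat \<Rightarrow> 'k) \<Rightarrow> 'h" where
  "Sm p \<kappa> x y c = (\<Sum>a<p. \<Sum>b<p. \<kappa> (c a b) * (x ^ a * y ^ b))"

lemma sum_delta2:
  fixes g :: "nat \<Rightarrow> nat \<Rightarrow> 'h::comm_ring_1"
  assumes "a < p" "b < p"
  shows "(\<Sum>a'<p. \<Sum>b'<p. (if a' = a \<and> b' = b then e else 0) * g a' b') = e * g a b"
proof -
  have i: "(\<Sum>b'<p. (if a' = a \<and> b' = b then e else 0) * g a' b') = (if a' = a then e * g a' b else 0)" for a'
  proof -
    have "(\<Sum>b'<p. (if a' = a \<and> b' = b then e else 0) * g a' b')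
       = (\<Sum>b'<p. if b = b' then (if a' = a then e * g a' b' else 0) else 0)"
      by (rule sum.cong) auto
    also have "\<dots> = (if a' = a then e * g a' b else 0)" using assms by simp
    finally show ?thesis .
  qed
  have "(\<Sum>a'<p. \<Sum>b'<p. (if a' = a \<and> b' = b then e else 0) * g a' b')
      = (\<Sum>a'<p. if a = a' then e * g a' b else 0)" unfolding i by (rule sum.cong) auto
  also have "\<dots> = e * g a b" using assms by simp
  finally show ?thesis .
qed

context
  fixes p :: nat and \<kappa> :: "'k::field \<Rightarrow> 'h::comm_ring_1" and t :: "nat \<Rightarrow> 'h" and B :: "'k mat2"
  assumes H: "prim_gen_rank_p2 p \<kappa> t B"
begin

lemma sh: "scalar_hom \<kappa>" using H unfolding prim_gen_rank_p2_def by blast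

lemma basis: "\<exists>!c. supp p c \<and> h = Sm p \<kappa> (t 1) (t 2) c"
proof -
  have "\<exists>!c :: nat \<Rightarrow> nat \<Rightarrow> 'k. (\<forall>a b. (p \<le> a \<or> p \<le> b) \<longrightarrow> c a b = 0) \<and>
          h = (\<Sum>a<p. \<Sum>b<p. \<kappa> (c a b) * t 1 ^ a * t 2 ^ b)"
    using H unfolding prim_gen_rank_p2_def by blast
  then show ?thesis unfolding supp_def Sm_def by (simp add: mult.assoc)
qed

definition coef :: "'h \<Rightarrow> nat \<Rightarrow> nat \<Rightarrow> 'k" where
  "coef h = (THE c. supp p c \<and> h = Sm p \<kappa> (t 1) (t 2) c)"

lemma coef_spec: "supp p (coef h) \<and> h = Sm p \<kappa> (t 1) (t 2) (coef h)"
  unfolding coef_def using theI'[OF basis] .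

lemma coef_eq: "supp p c \<Longrightarrow> h = Sm p \<kappa> (t 1) (t 2) c \<Longrightarrow> coef h = c"
  unfolding coef_def using basis the1_equality by blast

lemma Sm_add: "Sm p \<kappa> x y (\<lambda>a b. c a b + d a b) = Sm p \<kappa> x y c + Sm p \<kappa> x y d"
  unfolding Sm_def by (simp add: k_add[OF sh] distrib_right sum.distrib)

lemma Sm_scale: "Sm p \<kappa> x y (\<lambda>a b. r * c a b) = \<kappa> r * Sm p \<kappa> x y c"
  unfolding Sm_def by (simp add: k_mult[OF sh] sum_distrib_left mult.assoc)

lemma Sm_zero: "Sm p \<kappa> x y (\<lambda>a b. 0) = 0"
  unfolding Sm_def by (simp add: k_zero[OF sh])

lemma Sm_ind: "a < p \<Longrightarrow> b < p \<Longrightarrow> Sm p \<kappa> x y (\<lambda>a' b'. if a' = a \<and> b' = b then e else 0) = \<kappa> e * (x ^ a * y ^ b)"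
proof -
  assume ab: "a < p" "b < p"
  have "Sm p \<kappa> x y (\<lambda>a' b'. if a' = a \<and> b' = b then e else 0)
      = (\<Sum>a'<p. \<Sum>b'<p. (if a' = a \<and> b' = b then \<kappa> e else 0) * (x ^ a' * y ^ b'))"
    unfolding Sm_def by (intro sum.cong refl) (simp add: k_zero[OF sh])
  also have "\<dots> = \<kappa> e * (x ^ a * y ^ b)" by (rule sum_delta2[OF ab])
  finally show ?thesis .
qed

lemma coef_add: "coef (h + g) = (\<lambda>a b. coef h a b + coef g a b)"
  apply (rule coef_eq)
  using coef_spec[of h] coef_spec[of g] Sm_add unfolding supp_def by auto

lemma coef_scale: "coef (\<kappa> r * h) = (\<lambda>a b. r * coef h a b)"
  apply (rule coef_eq)
  using coef_spec[of h] Sm_scale unfolding supp_def by auto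

lemma coef_zero: "coef 0 = (\<lambda>a b. 0)"
  apply (rule coef_eq) using Sm_zero unfolding supp_def by auto

lemma coef_sum: "finite A \<Longrightarrow> coef (\<Sum>m\<in>A. \<kappa> (e m) * g m) a b = (\<Sum>m\<in>A. e m * coef (g m) a b)"
  by (induction A rule: finite_induct) (simp_all add: coef_zero coef_add coef_scale)

lemma coef_mono: "k < p \<Longrightarrow> l < p \<Longrightarrow> coef (t 1 ^ k * t 2 ^ l) = (\<lambda>a b. if a = k \<and> b = l then 1 else 0)"
  apply (rule coef_eq)
  unfolding supp_def using Sm_ind[of k l "t 1" "t 2" 1] by (auto simp: k_one[OF sh])

lemma tp1: "t 1 ^ p = \<kappa> (B 1 1) * t 1 + \<kappa> (B 2 1) * t 2"
  using H unfolding prim_gen_rank_p2_def by simp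
lemma tp2: "t 2 ^ p = \<kappa> (B 1 2) * t 1 + \<kappa> (B 2 2) * t 2"
  using H unfolding prim_gen_rank_p2_def by simp

lemma tdeg_aux:
  assumes p2: "2 \<le> p"
  shows "n = k + l \<Longrightarrow> (\<forall>a b. k + l < a + b \<longrightarrow> coef (t 1 ^ k * t 2 ^ l) a b = 0) \<and>
     ((p \<le> k \<or> p \<le> l) \<longrightarrow> (\<forall>a b. k + l \<le> a + b \<longrightarrow> coef (t 1 ^ k * t 2 ^ l) a b = 0))"
proof (induction n arbitrary: k l rule: less_induct)
  case (less n)
  show ?case
  proof (cases "p \<le> k")
    case True
    have eq: "t 1 ^ k * t 2 ^ l = \<kappa> (B 1 1) * (t 1 ^ (k - p + 1) * t 2 ^ l) + \<kappa> (B 2 1) * (t 1 ^ (k - p) * t 2 ^ (l + 1))"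
    proof -
      have "t 1 ^ k * t 2 ^ l = t 1 ^ (k - p) * t 1 ^ p * t 2 ^ l" using True by (simp add: power_add[symmetric])
      also have "\<dots> = \<kappa> (B 1 1) * (t 1 ^ (k - p + 1) * t 2 ^ l) + \<kappa> (B 2 1) * (t 1 ^ (k - p) * t 2 ^ (l + 1))"
        unfolding tp1 by (simp add: algebra_simps)
      finally show ?thesis .
    qed
    have IH1: "\<forall>a b. (k - p + 1) + l < a + b \<longrightarrow> coef (t 1 ^ (k - p + 1) * t 2 ^ l) a b = 0"
      using less.IH[of "k - p + 1 + l" "k - p + 1" l] less.prems True p2 by auto
    have IH2: "\<forall>a b. (k - p) + (l + 1) < a + b \<longrightarrow> coef (t 1 ^ (k - p) * t 2 ^ (l + 1)) a b = 0"
      using less.IH[of "k - p + (l + 1)" "k - p" "l + 1"] less.prems True p2 by auto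
    have "\<forall>a b. k + l \<le> a + b \<longrightarrow> coef (t 1 ^ k * t 2 ^ l) a b = 0"
    proof (intro allI impI)
      fix a b assume "k + l \<le> a + b"
      then have "(k - p + 1) + l < a + b" "(k - p) + (l + 1) < a + b" using True p2 by auto
      then show "coef (t 1 ^ k * t 2 ^ l) a b = 0" using IH1 IH2 unfolding eq
        by (simp add: coef_add coef_scale)
    qed
    then show ?thesis using True by auto
  next
    case nk: False
    show ?thesis
    proof (cases "p \<le> l")
      case True
      have eq: "t 1 ^ k * t 2 ^ l = \<kappa> (B 1 2) * (t 1 ^ (k + 1) * t 2 ^ (l - p)) + \<kappa> (B 2 2) * (t 1 ^ k * t 2 ^ (l - p + 1))"
      proof -
        have "t 1 ^ k * t 2 ^ l = t 1 ^ k * (t 2 ^ (l - p) * t 2 ^ p)" using True by (simp add: power_add[symmetric])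
        also have "\<dots> = \<kappa> (B 1 2) * (t 1 ^ (k + 1) * t 2 ^ (l - p)) + \<kappa> (B 2 2) * (t 1 ^ k * t 2 ^ (l - p + 1))"
          unfolding tp2 by (simp add: algebra_simps)
        finally show ?thesis .
      qed
      have IH1: "\<forall>a b. (k + 1) + (l - p) < a + b \<longrightarrow> coef (t 1 ^ (k + 1) * t 2 ^ (l - p)) a b = 0"
        using less.IH[of "k + 1 + (l - p)" "k + 1" "l - p"] less.prems True p2 by auto
      have IH2: "\<forall>a b. k + (l - p + 1) < a + b \<longrightarrow> coef (t 1 ^ k * t 2 ^ (l - p + 1)) a b = 0"
        using less.IH[of "k + (l - p + 1)" k "l - p + 1"] less.prems True p2 by auto
      have "\<forall>a b. k + l \<le> a + b \<longrightarrow> coef (t 1 ^ k * t 2 ^ l) a b = 0"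
      proof (intro allI impI)
        fix a b assume "k + l \<le> a + b"
        then have "(k + 1) + (l - p) < a + b" "k + (l - p + 1) < a + b" using True p2 by auto
        then show "coef (t 1 ^ k * t 2 ^ l) a b = 0" using IH1 IH2 unfolding eq
          by (simp add: coef_add coef_scale)
      qed
      then show ?thesis using True by auto
    next
      case False
      then show ?thesis using nk coef_mono[of k l] by auto
    qed
  qed
qed

lemma tdeg:
  assumes p2: "2 \<le> p" and nz: "coef (t 1 ^ k * t 2 ^ l) a b \<noteq> 0"
  shows "(a = k \<and> b = l) \<or> a + b < k + l"
proof (cases "k < p \<and> l < p")
  case True
  then show ?thesis using nz coef_mono[of k l] by (auto split: if_splits)
next
  case False
  then show ?thesis using tdeg_aux[OF p2 refl, of k l] nz by force
qed

end


context
  fixes p :: nat and \<kappa> :: "'k::field \<Rightarrow> 'h::comm_ring_1" and t :: "nat \<Rightarrow> 'h" and B :: "'k mat2"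
  assumes H: "prim_gen_rank_p2 p \<kappa> t B"
begin

lemma coef_sum': "finite A \<Longrightarrow> coef p \<kappa> t (\<Sum>m\<in>A. f m) a b = (\<Sum>m\<in>A. coef p \<kappa> t (f m) a b)"
  by (induction A rule: finite_induct) (simp_all add: coef_zero[OF H] coef_add[OF H])

lemma expand:
  "(\<kappa> \<alpha> * t 1 + \<kappa> \<beta> * t 2) ^ a * (\<kappa> \<gamma> * t 2) ^ b =
   (\<Sum>m\<le>a. \<kappa> (of_nat (a choose m) * \<alpha> ^ m * \<beta> ^ (a - m) * \<gamma> ^ b) * (t 1 ^ m * t 2 ^ (a - m + b)))"
proof -
  have sh: "scalar_hom \<kappa>" by (rule sh[OF H])
  have "(\<kappa> \<alpha> * t 1 + \<kappa> \<beta> * t 2) ^ a * (\<kappa> \<gamma> * t 2) ^ b =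
     (\<Sum>m\<le>a. of_nat (a choose m) * (\<kappa> \<alpha> * t 1) ^ m * (\<kappa> \<beta> * t 2) ^ (a - m)) * (\<kappa> \<gamma> * t 2) ^ b"
    by (simp add: binomial_ring)
  also have "\<dots> = (\<Sum>m\<le>a. \<kappa> (of_nat (a choose m) * \<alpha> ^ m * \<beta> ^ (a - m) * \<gamma> ^ b) * (t 1 ^ m * t 2 ^ (a - m + b)))"
    unfolding sum_distrib_right
  proof (intro sum.cong refl)
    fix m assume "m \<in> {..a}"
    have e: "t 2 ^ (a - m + b) = t 2 ^ (a - m) * t 2 ^ b" by (simp add: power_add)
    show "of_nat (a choose m) * (\<kappa> \<alpha> * t 1) ^ m * (\<kappa> \<beta> * t 2) ^ (a - m) * (\<kappa> \<gamma> * t 2) ^ b =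
      \<kappa> (of_nat (a choose m) * \<alpha> ^ m * \<beta> ^ (a - m) * \<gamma> ^ b) * (t 1 ^ m * t 2 ^ (a - m + b))"
      unfolding e by (simp add: k_mult[OF sh] k_pow[OF sh] k_of_nat[OF sh] power_mult_distrib algebra_simps)
  qed
  finally show ?thesis .
qed

lemma xy_zero:
  assumes p2: "2 \<le> p" and ord: "a + b < a' + b' \<or> (a + b = a' + b' \<and> a < a')"
  shows "coef p \<kappa> t ((\<kappa> \<alpha> * t 1 + \<kappa> \<beta> * t 2) ^ a * (\<kappa> \<gamma> * t 2) ^ b) a' b' = 0"
proof -
  have "coef p \<kappa> t ((\<kappa> \<alpha> * t 1 + \<kappa> \<beta> * t 2) ^ a * (\<kappa> \<gamma> * t 2) ^ b) a' b'
    = (\<Sum>m\<le>a. (of_nat (a choose m) * \<alpha> ^ m * \<beta> ^ (a - m) * \<gamma> ^ b) * coef p \<kappa> t (t 1 ^ m * t 2 ^ (a - m + b)) a' b')"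
    unfolding expand by (rule coef_sum[OF H]) simp
  also have "\<dots> = 0"
  proof (rule sum.neutral, rule ballI)
    fix m assume m: "m \<in> {..a}"
    have "coef p \<kappa> t (t 1 ^ m * t 2 ^ (a - m + b)) a' b' = 0"
    proof (rule ccontr)
      assume "coef p \<kappa> t (t 1 ^ m * t 2 ^ (a - m + b)) a' b' \<noteq> 0"
      from tdeg[OF H p2 this] m ord show False by auto
    qed
    then show "(of_nat (a choose m) * \<alpha> ^ m * \<beta> ^ (a - m) * \<gamma> ^ b) * coef p \<kappa> t (t 1 ^ m * t 2 ^ (a - m + b)) a' b' = 0"
      by simp
  qed
  finally show ?thesis .
qed

lemma xy_diag:
  assumes p2: "2 \<le> p" and ab: "a < p" "b < p"
  shows "coef p \<kappa> t ((\<kappa> \<alpha> * t 1 + \<kappa> \<beta> * t 2) ^ a * (\<kappa> \<gamma> * t 2) ^ b) a b = \<alpha> ^ a * \<gamma> ^ b"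
proof -
  have "coef p \<kappa> t ((\<kappa> \<alpha> * t 1 + \<kappa> \<beta> * t 2) ^ a * (\<kappa> \<gamma> * t 2) ^ b) a b
    = (\<Sum>m\<le>a. (of_nat (a choose m) * \<alpha> ^ m * \<beta> ^ (a - m) * \<gamma> ^ b) * coef p \<kappa> t (t 1 ^ m * t 2 ^ (a - m + b)) a b)"
    unfolding expand by (rule coef_sum[OF H]) simp
  also have "\<dots> = (\<Sum>m\<le>a. if m = a then \<alpha> ^ a * \<gamma> ^ b else 0)"
  proof (rule sum.cong[OF refl])
    fix m assume m: "m \<in> {..a}"
    show "(of_nat (a choose m) * \<alpha> ^ m * \<beta> ^ (a - m) * \<gamma> ^ b) * coef p \<kappa> t (t 1 ^ m * t 2 ^ (a - m + b)) a b
        = (if m = a then \<alpha> ^ a * \<gamma> ^ b else 0)"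
    proof (cases "m = a")
      case True
      then show ?thesis using coef_mono[OF H ab] by simp
    next
      case False
      have "coef p \<kappa> t (t 1 ^ m * t 2 ^ (a - m + b)) a b = 0"
      proof (rule ccontr)
        assume "coef p \<kappa> t (t 1 ^ m * t 2 ^ (a - m + b)) a b \<noteq> 0"
        from tdeg[OF H p2 this] m False show False by auto
      qed
      then show ?thesis using False by simp
    qed
  qed
  also have "\<dots> = \<alpha> ^ a * \<gamma> ^ b" by simp
  finally show ?thesis .
qed

definition key :: "nat \<Rightarrow> nat \<Rightarrow> nat" where "key a b = (a + b) * p + a"

lemma key_lt:
  assumes "a < p" "a' < p" "a + b < a' + b' \<or> (a + b = a' + b' \<and> a < a')"
  shows "key a b < key a' b'"
proof (cases "a + b < a' + b'")
  case True
  then have "(a + b + 1) * p \<le> (a' + b') * p" by (intro mult_le_mono1) simp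
  then show ?thesis using assms(1) unfolding key_def by (simp add: algebra_simps)
next
  case False
  then show ?thesis using assms unfolding key_def by auto
qed

lemma indep:
  assumes p2: "2 \<le> p" and an: "\<alpha> \<noteq> 0" and gn: "\<gamma> \<noteq> 0"
    and z: "Sm p \<kappa> (\<kappa> \<alpha> * t 1 + \<kappa> \<beta> * t 2) (\<kappa> \<gamma> * t 2) c = 0"
  shows "\<forall>a<p. \<forall>b<p. c a b = 0"
proof (rule ccontr)
  define x where "x = \<kappa> \<alpha> * t 1 + \<kappa> \<beta> * t 2"
  define y where "y = \<kappa> \<gamma> * t 2"
  define S where "S = {(a, b). a < p \<and> b < p \<and> c a b \<noteq> 0}"
  assume "\<not> ?thesis"
  then have ne: "S \<noteq> {}" unfolding S_def by auto
  have fin: "finite S" unfolding S_def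
    by (rule finite_subset[of _ "{..<p} \<times> {..<p}"]) auto
  define N where "N = Max ((\<lambda>(a, b). key a b) ` S)"
  have "N \<in> (\<lambda>(a, b). key a b) ` S" unfolding N_def using fin ne by simp
  then obtain a0 b0 where S0: "(a0, b0) \<in> S" and N0: "N = key a0 b0" by auto
  have le: "key a b \<le> N" if "(a, b) \<in> S" for a b
    unfolding N_def using fin that by (intro Max_ge) force+
  have a0p: "a0 < p" "b0 < p" and c0: "c a0 b0 \<noteq> 0" using S0 unfolding S_def by auto
  have term0: "c a b * coef p \<kappa> t (x ^ a * y ^ b) a0 b0 = (if a = a0 \<and> b = b0 then c a0 b0 * (\<alpha> ^ a0 * \<gamma> ^ b0) else 0)"
    if ab: "a < p" "b < p" for a b
  proof (cases "a = a0 \<and> b = b0")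
    case True
    then show ?thesis unfolding x_def y_def using xy_diag[OF p2 a0p] by simp
  next
    case False
    show ?thesis
    proof (cases "c a b = 0")
      case True then show ?thesis using False by auto
    next
      case cn: False
      then have inS: "(a, b) \<in> S" unfolding S_def using ab by auto
      have "a + b < a0 + b0 \<or> (a + b = a0 + b0 \<and> a < a0)"
      proof -
        have "\<not> (a0 + b0 < a + b \<or> (a0 + b0 = a + b \<and> a0 < a))"
        proof
          assume "a0 + b0 < a + b \<or> (a0 + b0 = a + b \<and> a0 < a)"
          then have "key a0 b0 < key a b" using key_lt a0p ab by blast
          then show False using le[OF inS] N0 by simp
        qed
        then show ?thesis using False by auto
      qed
      then have "coef p \<kappa> t (x ^ a * y ^ b) a0 b0 = 0" unfolding x_def y_def by (rule xy_zero[OF p2])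
      then show ?thesis using False by auto
    qed
  qed
  have "0 = coef p \<kappa> t (Sm p \<kappa> x y c) a0 b0" using z coef_zero[OF H] unfolding x_def y_def by simp
  also have "\<dots> = (\<Sum>a<p. \<Sum>b<p. c a b * coef p \<kappa> t (x ^ a * y ^ b) a0 b0)"
    unfolding Sm_def by (simp add: coef_sum' coef_scale[OF H])
  also have "\<dots> = (\<Sum>a<p. \<Sum>b<p. (if a = a0 \<and> b = b0 then c a0 b0 * (\<alpha> ^ a0 * \<gamma> ^ b0) else 0) * 1)"
    using term0 by simp
  also have "\<dots> = c a0 b0 * (\<alpha> ^ a0 * \<gamma> ^ b0) * 1" by (rule sum_delta2[OF a0p])
  finally show False using c0 an gn by simp
qed

end


lemma field2a:
  fixes a b c d C1 C2 D :: "'k::field"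
  assumes "D \<noteq> 0"
  shows "a * (d / D * C1 + - b / D * C2) + b * (- c / D * C1 + a / D * C2) = (a * d - b * c) * C1 / D"
    and "c * (d / D * C1 + - b / D * C2) + d * (- c / D * C1 + a / D * C2) = (a * d - b * c) * C2 / D"
  using assms by (simp_all add: field_simps)

lemma field2:
  fixes a b c d C1 C2 :: "'k::field"
  assumes "a * d - b * c \<noteq> 0"
  shows "a * (d / (a * d - b * c) * C1 + - b / (a * d - b * c) * C2) + b * (- c / (a * d - b * c) * C1 + a / (a * d - b * c) * C2) = C1"
    and "c * (d / (a * d - b * c) * C1 + - b / (a * d - b * c) * C2) + d * (- c / (a * d - b * c) * C1 + a / (a * d - b * c) * C2) = C2"
proof -
  note f = field2a[where D="a * d - b * c", OF assms]
  show "a * (d / (a * d - b * c) * C1 + - b / (a * d - b * c) * C2) + b * (- c / (a * d - b * c) * C1 + a / (a * d - b * c) * C2) = C1"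
    unfolding f(1) using assms by simp
  show "c * (d / (a * d - b * c) * C1 + - b / (a * d - b * c) * C2) + d * (- c / (a * d - b * c) * C1 + a / (a * d - b * c) * C2) = C2"
    unfolding f(2) using assms by simp
qed

lemma mat_id0:
  fixes \<Theta> :: "'k::field mat2"
  assumes d: "det2 \<Theta> \<noteq> 0" and k: "k \<in> {1,2}"
  shows "(\<Sum>s\<in>{1,2}. \<Theta> k s * mmult2 (inv2 \<Theta>) C s r) = C k r"
proof -
  have "(\<Sum>s\<in>{1,2}. \<Theta> k s * mmult2 (inv2 \<Theta>) C s r) =
    \<Theta> k 1 * (\<Theta> 2 2 / det2 \<Theta> * C 1 r + - \<Theta> 1 2 / det2 \<Theta> * C 2 r) + \<Theta> k 2 * (- \<Theta> 2 1 / det2 \<Theta> * C 1 r + \<Theta> 1 1 / det2 \<Theta> * C 2 r)"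
    unfolding mmult2_def inv2_def by simp
  then show ?thesis using k d field2[of "\<Theta> 1 1" "\<Theta> 2 2" "\<Theta> 1 2" "\<Theta> 2 1" "C 1 r" "C 2 r"]
    unfolding det2_def by auto
qed

lemma mat_id:
  fixes \<Theta> :: "'k::field mat2"
  assumes d: "det2 \<Theta> \<noteq> 0" and k: "k \<in> {1,2}"
  shows "(\<Sum>s\<in>{1,2}. \<Theta> k s * twisted_mat p B \<Theta> s r) = (\<Sum>j\<in>{1,2}. B k j * \<Theta> j r ^ p)"
  unfolding twisted_mat_def mat_id0[OF d k] unfolding mmult2_def entry_pow2_def ..

context
  fixes p :: nat and \<kappa> :: "'k::field \<Rightarrow> 'h::comm_ring_1" and t :: "nat \<Rightarrow> 'h" and B :: "'k mat2"
  assumes H: "prim_gen_rank_p2 p \<kappa> t B"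
begin

lemma part1:
  assumes pr: "prime p" and cp: "of_nat p = (0::'k)" and d: "det2 \<Theta> \<noteq> 0" and r: "r \<in> {1,2}"
  shows "col_image \<kappa> t \<Theta> r ^ p = (\<Sum>s\<in>{1,2}. \<kappa> (twisted_mat p B \<Theta> s r) * col_image \<kappa> t \<Theta> s)"
proof -
  have sh: "scalar_hom \<kappa>" by (rule sh[OF H])
  have ch: "of_nat p = (0::'h)" using k_of_nat[OF sh, of p] cp k_zero[OF sh] by simp
  have ci: "col_image \<kappa> t \<Theta> s = \<kappa> (\<Theta> 1 s) * t 1 + \<kappa> (\<Theta> 2 s) * t 2" for s
    unfolding col_image_def by simp
  have "col_image \<kappa> t \<Theta> r ^ p = \<kappa> (\<Theta> 1 r ^ p) * t 1 ^ p + \<kappa> (\<Theta> 2 r ^ p) * t 2 ^ p"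
    unfolding ci frob[OF pr ch] by (simp add: power_mult_distrib k_pow[OF sh])
  also have "\<dots> = \<kappa> (\<Sum>j\<in>{1,2}. B 1 j * \<Theta> j r ^ p) * t 1 + \<kappa> (\<Sum>j\<in>{1,2}. B 2 j * \<Theta> j r ^ p) * t 2"
    unfolding tp1[OF H] tp2[OF H] by (simp add: k_add[OF sh] k_mult[OF sh] algebra_simps)
  also have "\<dots> = \<kappa> (\<Sum>s\<in>{1,2}. \<Theta> 1 s * twisted_mat p B \<Theta> s r) * t 1 + \<kappa> (\<Sum>s\<in>{1,2}. \<Theta> 2 s * twisted_mat p B \<Theta> s r) * t 2"
    using mat_id[OF d] by simp
  also have "\<dots> = (\<Sum>s\<in>{1,2}. \<kappa> (twisted_mat p B \<Theta> s r) * col_image \<kappa> t \<Theta> s)"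
    unfolding ci by (simp add: k_add[OF sh] k_mult[OF sh] algebra_simps)
  finally show ?thesis .
qed

end


lemma subalg_sub:
  assumes "S \<subseteq> T"
  shows "R_subalg v \<kappa> S \<subseteq> R_subalg v \<kappa> T"
proof
  fix z assume "z \<in> R_subalg v \<kappa> S"
  then show "z \<in> R_subalg v \<kappa> T" using assms
    by (induction rule: R_subalg.induct) (auto intro: R_subalg.intros)
qed

lemma subalg_min:
  assumes "S \<subseteq> R_subalg v \<kappa> T"
  shows "R_subalg v \<kappa> S \<subseteq> R_subalg v \<kappa> T"
proof
  fix z assume "z \<in> R_subalg v \<kappa> S"
  then show "z \<in> R_subalg v \<kappa> T" using assms
    by (induction rule: R_subalg.induct) (auto intro: R_subalg.intros)
qed

context
  fixes p :: nat and \<kappa> :: "'k::field \<Rightarrow> 'h::comm_ring_1" and t :: "nat \<Rightarrow> 'h" and B :: "'k mat2"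
    and v :: "'k \<Rightarrow> ereal" and \<pi> :: 'k and x y :: 'h and a11 a12 a21 a22 :: 'k
  assumes H: "prim_gen_rank_p2 p \<kappa> t B"
    and nv: "normalized_discrete_valuation v \<pi>"
    and p2: "2 \<le> p"
    and xp: "x ^ p = \<kappa> a11 * x + \<kappa> a21 * y"
    and yp: "y ^ p = \<kappa> a12 * x + \<kappa> a22 * y"
    and aR: "a11 \<in> val_ring v" "a12 \<in> val_ring v" "a21 \<in> val_ring v" "a22 \<in> val_ring v"
begin

definition M :: "'h set" where
  "M = {h. \<exists>c. (\<forall>a b. c a b \<in> val_ring v) \<and> h = Sm p \<kappa> x y c}"

lemma M_I: "(\<And>a b. c a b \<in> val_ring v) \<Longrightarrow> h = Sm p \<kappa> x y c \<Longrightarrow> h \<in> M"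
  unfolding M_def by blast

lemma M_add: "h \<in> M \<Longrightarrow> g \<in> M \<Longrightarrow> h + g \<in> M"
proof -
  assume "h \<in> M" "g \<in> M"
  then obtain c d where c: "\<forall>a b. c a b \<in> val_ring v" "h = Sm p \<kappa> x y c"
    and d: "\<forall>a b. d a b \<in> val_ring v" "g = Sm p \<kappa> x y d" unfolding M_def by auto
  show ?thesis
    by (rule M_I[of "\<lambda>a b. c a b + d a b"]) (use c d Sm_add[OF H] R_add[OF nv] in auto)
qed

lemma M_scale: "r \<in> val_ring v \<Longrightarrow> h \<in> M \<Longrightarrow> \<kappa> r * h \<in> M"
proof -
  assume r: "r \<in> val_ring v" and "h \<in> M"
  then obtain c where c: "\<forall>a b. c a b \<in> val_ring v" "h = Sm p \<kappa> x y c" unfolding M_def by auto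
  show ?thesis
    by (rule M_I[of "\<lambda>a b. r * c a b"]) (use c r Sm_scale[OF H] R_mult[OF nv] in auto)
qed

lemma M_zero: "0 \<in> M"
  unfolding M_def using Sm_zero[OF H, of x y] R_zero[OF nv] by force

lemma M_sum: "finite A \<Longrightarrow> (\<And>m. m \<in> A \<Longrightarrow> f m \<in> M) \<Longrightarrow> sum f A \<in> M"
  by (induction A rule: finite_induct) (auto simp: M_zero M_add)

lemma M_small: "a < p \<Longrightarrow> b < p \<Longrightarrow> x ^ a * y ^ b \<in> M"
proof -
  assume ab: "a < p" "b < p"
  have "Sm p \<kappa> x y (\<lambda>a' b'. if a' = a \<and> b' = b then 1 else 0) = x ^ a * y ^ b"
    using Sm_ind[OF H ab, of x y 1] by (simp add: k_one[OF sh[OF H]])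
  moreover have "\<forall>a' b'. (if a' = a \<and> b' = b then 1 else 0) \<in> val_ring v" using R_one[OF nv] R_zero[OF nv] by auto
  ultimately show ?thesis by (intro M_I[of "\<lambda>a' b'. if a' = a \<and> b' = b then 1 else 0"]) auto
qed

lemma M_mono_aux: "n = a + b \<Longrightarrow> x ^ a * y ^ b \<in> M"
proof (induction n arbitrary: a b rule: less_induct)
  case (less n)
  show ?case
  proof (cases "p \<le> a")
    case True
    have "x ^ a * y ^ b = x ^ (a - p) * x ^ p * y ^ b" using True by (simp add: power_add[symmetric])
    also have "\<dots> = \<kappa> a11 * (x ^ (a - p + 1) * y ^ b) + \<kappa> a21 * (x ^ (a - p) * y ^ (b + 1))"
      unfolding xp by (simp add: algebra_simps)
    finally have eq: "x ^ a * y ^ b = \<kappa> a11 * (x ^ (a - p + 1) * y ^ b) + \<kappa> a21 * (x ^ (a - p) * y ^ (b + 1))" .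
    have "x ^ (a - p + 1) * y ^ b \<in> M" using less.IH[of "a - p + 1 + b" "a - p + 1" b] less.prems True p2 by auto
    moreover have "x ^ (a - p) * y ^ (b + 1) \<in> M" using less.IH[of "a - p + (b + 1)" "a - p" "b + 1"] less.prems True p2 by auto
    ultimately show ?thesis unfolding eq using aR by (intro M_add M_scale)
  next
    case nk: False
    show ?thesis
    proof (cases "p \<le> b")
      case True
      have "x ^ a * y ^ b = x ^ a * (y ^ (b - p) * y ^ p)" using True by (simp add: power_add[symmetric])
      also have "\<dots> = \<kappa> a12 * (x ^ (a + 1) * y ^ (b - p)) + \<kappa> a22 * (x ^ a * y ^ (b - p + 1))"
        unfolding yp by (simp add: algebra_simps)
      finally have eq: "x ^ a * y ^ b = \<kappa> a12 * (x ^ (a + 1) * y ^ (b - p)) + \<kappa> a22 * (x ^ a * y ^ (b - p + 1))" .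
      have "x ^ (a + 1) * y ^ (b - p) \<in> M" using less.IH[of "a + 1 + (b - p)" "a + 1" "b - p"] less.prems True p2 by auto
      moreover have "x ^ a * y ^ (b - p + 1) \<in> M" using less.IH[of "a + (b - p + 1)" a "b - p + 1"] less.prems True p2 by auto
      ultimately show ?thesis unfolding eq using aR by (intro M_add M_scale)
    next
      case False
      then show ?thesis using nk M_small by simp
    qed
  qed
qed

lemma M_mono: "x ^ a * y ^ b \<in> M" using M_mono_aux by blast

lemma M_mult_mono: "h \<in> M \<Longrightarrow> x ^ a * y ^ b * h \<in> M"
proof -
  assume "h \<in> M"
  then obtain c where c: "\<forall>a b. c a b \<in> val_ring v" "h = Sm p \<kappa> x y c" unfolding M_def by auto
  have "x ^ a * y ^ b * h = (\<Sum>a'<p. \<Sum>b'<p. \<kappa> (c a' b') * (x ^ (a + a') * y ^ (b + b')))"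
    unfolding c(2) Sm_def sum_distrib_left by (intro sum.cong refl) (simp add: power_add mult_ac)
  also have "\<dots> \<in> M" using c(1) by (intro M_sum M_scale M_mono) auto
  finally show ?thesis .
qed

lemma M_mult: "h \<in> M \<Longrightarrow> g \<in> M \<Longrightarrow> h * g \<in> M"
proof -
  assume h: "h \<in> M" and "g \<in> M"
  then obtain d where d: "\<forall>a b. d a b \<in> val_ring v" "g = Sm p \<kappa> x y d" unfolding M_def by auto
  have "h * g = (\<Sum>a<p. \<Sum>b<p. \<kappa> (d a b) * (x ^ a * y ^ b * h))"
    unfolding d(2) Sm_def sum_distrib_left by (intro sum.cong refl) (simp add: mult_ac)
  also have "\<dots> \<in> M" using d(1) h by (intro M_sum M_scale M_mult_mono) auto
  finally show ?thesis .
qed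

lemma subalg_M: "R_subalg v \<kappa> {x, y} \<subseteq> M"
proof
  fix z assume "z \<in> R_subalg v \<kappa> {x, y}"
  then show "z \<in> M"
  proof (induction rule: R_subalg.induct)
    case (scal r)
    have "\<kappa> r * (x ^ 0 * y ^ 0) \<in> M" using scal by (intro M_scale M_mono)
    then show ?case by simp
  next
    case (gen z)
    have "x ^ 1 * y ^ 0 \<in> M" "x ^ 0 * y ^ 1 \<in> M" by (rule M_mono)+
    then show ?case using gen by auto
  next
    case (add z w) then show ?case by (blast intro: M_add)
  next
    case (mult z w) then show ?case by (blast intro: M_mult)
  qed
qed

end


lemma Sm_diff:
  assumes sh: "scalar_hom \<kappa>"
  shows "Sm p \<kappa> x y (\<lambda>a b. c a b - d a b) = Sm p \<kappa> x y c - Sm p \<kappa> x y d"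
  unfolding Sm_def by (simp add: k_diff[OF sh] left_diff_distrib sum_subtractf)

theorem corollary6p5:
  fixes p :: nat and v :: "'k::field \<Rightarrow> ereal" and \<pi> :: 'k
    and \<kappa> :: "'k \<Rightarrow> 'h::comm_ring_1" and t :: "nat \<Rightarrow> 'h" and B :: "'k mat2"
    and i j :: int and \<theta> :: 'k
  assumes K: "complete_dvf_char p v \<pi>"
    and H: "prim_gen_rank_p2 p \<kappa> t B"
    and vth: "v \<theta> \<le> ereal (of_int j)"
    and integral: "in_M2 (val_ring v) (twisted_mat p B (theta_mat \<pi> i j \<theta>))"
  shows "(\<forall>r\<in>{1,2}. col_image \<kappa> t (theta_mat \<pi> i j \<theta>) r ^ p =
            (\<Sum>s\<in>{1,2}. \<kappa> (twisted_mat p B (theta_mat \<pi> i j \<theta>) s r)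
                          * col_image \<kappa> t (theta_mat \<pi> i j \<theta>) s))
         \<and> hopf_order_of v \<kappa> t (theta_mat \<pi> i j \<theta>) = H_ijt v \<kappa> t \<pi> i j \<theta>
         \<and> (\<forall>\<theta>'. v \<theta>' \<le> ereal (of_int j) \<longrightarrow>
              in_M2 (val_ring v) (twisted_mat p B (theta_mat \<pi> i j \<theta>')) \<longrightarrow>
              (H_ijt v \<kappa> t \<pi> i j \<theta> = H_ijt v \<kappa> t \<pi> i j \<theta>' \<longleftrightarrow>
               ereal (of_int j) \<le> v (\<theta> - \<theta>')))"
proof -
  have pr: "prime p" and cp: "of_nat p = (0::'k)" and nv: "normalized_discrete_valuation v \<pi>"
    using K unfolding complete_dvf_char_def by auto
  have p2: "2 \<le> p" using pr by (rule prime_ge_2_nat)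
  have sh: "scalar_hom \<kappa>" by (rule sh[OF H])
  define \<Theta> where "\<Theta> = theta_mat \<pi> i j \<theta>"
  define A where "A = twisted_mat p B \<Theta>"
  define x where "x = \<kappa> (\<pi> powi i) * t 1 + \<kappa> \<theta> * t 2"
  define y where "y = \<kappa> (\<pi> powi j) * t 2"
  have pin: "\<pi> powi i \<noteq> 0" "\<pi> powi j \<noteq> 0" using powi_nz[OF nv] by auto
  have det: "det2 \<Theta> \<noteq> 0" unfolding \<Theta>_def det2_def theta_mat_def using pin by simp
  have ci1: "col_image \<kappa> t \<Theta> 1 = x" unfolding col_image_def \<Theta>_def theta_mat_def x_def by simp
  have ci2: "col_image \<kappa> t \<Theta> 2 = y" unfolding col_image_def \<Theta>_def theta_mat_def y_def by (simp add: k_zero[OF sh])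
  have P1: "\<forall>r\<in>{1,2}. col_image \<kappa> t \<Theta> r ^ p = (\<Sum>s\<in>{1,2}. \<kappa> (A s r) * col_image \<kappa> t \<Theta> s)"
    unfolding A_def using part1[OF H pr cp det] by blast
  have xp: "x ^ p = \<kappa> (A 1 1) * x + \<kappa> (A 2 1) * y" using P1 ci1 ci2 by simp
  have yp: "y ^ p = \<kappa> (A 1 2) * x + \<kappa> (A 2 2) * y" using P1 ci1 ci2 by simp
  have aR: "A 1 1 \<in> val_ring v" "A 1 2 \<in> val_ring v" "A 2 1 \<in> val_ring v" "A 2 2 \<in> val_ring v"
    using integral unfolding A_def \<Theta>_def in_M2_def by auto
  have P2: "hopf_order_of v \<kappa> t \<Theta> = H_ijt v \<kappa> t \<pi> i j \<theta>"
    unfolding hopf_order_of_def H_ijt_def ci1 ci2 x_def y_def ..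
  have Hx: "H_ijt v \<kappa> t \<pi> i j \<theta> = R_subalg v \<kappa> {x, y}" unfolding H_ijt_def x_def y_def ..
  have P3: "H_ijt v \<kappa> t \<pi> i j \<theta> = H_ijt v \<kappa> t \<pi> i j \<theta>' \<longleftrightarrow> ereal (of_int j) \<le> v (\<theta> - \<theta>')" for \<theta>'
  proof -
    define x' where "x' = \<kappa> (\<pi> powi i) * t 1 + \<kappa> \<theta>' * t 2"
    have Hx': "H_ijt v \<kappa> t \<pi> i j \<theta>' = R_subalg v \<kappa> {x', y}" unfolding H_ijt_def x'_def y_def ..
    have shift: "x' = x + \<kappa> (d) * y" if "\<theta>' - \<theta> = d * \<pi> powi j" for d
    proof -
      have "\<kappa> d * y = \<kappa> (\<theta>' - \<theta>) * t 2" unfolding y_def that by (simp add: k_mult[OF sh] mult.assoc)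
      then show ?thesis unfolding x_def x'_def by (simp add: k_diff[OF sh] algebra_simps)
    qed
    show ?thesis
    proof
      assume eq: "H_ijt v \<kappa> t \<pi> i j \<theta> = H_ijt v \<kappa> t \<pi> i j \<theta>'"
      have "x' \<in> H_ijt v \<kappa> t \<pi> i j \<theta>'" unfolding Hx' by (rule R_subalg.gen) simp
      then have "x' \<in> R_subalg v \<kappa> {x, y}" using eq Hx by simp
      then have "x' \<in> M p \<kappa> v x y" using subalg_M[OF H nv p2 xp yp aR] by blast
      then obtain c where cR: "\<forall>a b. c a b \<in> val_ring v" and cx: "x' = Sm p \<kappa> x y c"
        unfolding M_def[OF H nv p2 xp yp aR] by blast
      define d where "d = (\<theta>' - \<theta>) / \<pi> powi j"
      have dd: "\<theta>' - \<theta> = d * \<pi> powi j" unfolding d_def using pin by simp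
      define e where "e = (\<lambda>(a'::nat) (b'::nat). (if a' = 1 \<and> b' = 0 then 1 else 0) + (if a' = 0 \<and> b' = 1 then d else (0::'k)))"
      have "Sm p \<kappa> x y e = \<kappa> 1 * (x ^ 1 * y ^ 0) + \<kappa> d * (x ^ 0 * y ^ 1)"
        unfolding e_def Sm_add[OF H] using p2 by (simp add: Sm_ind[OF H])
      then have "Sm p \<kappa> x y e = x'" using shift[OF dd] by (simp add: k_one[OF sh])
      then have "Sm p \<kappa> x y (\<lambda>a b. c a b - e a b) = 0" using cx Sm_diff[OF sh] by simp
      then have "\<forall>a<p. \<forall>b<p. c a b - e a b = 0"
        unfolding x_def y_def by (rule indep[OF H p2 pin(1) pin(2)])
      then have "c 0 1 - e 0 1 = 0" using p2 by auto
      then have "d = c 0 1" unfolding e_def by simp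
      then have "- d \<in> val_ring v" using cR R_neg[OF nv] by simp
      then have g: "ereal (of_int j) \<le> v ((- d) * \<pi> powi j)" using ge_iff[OF nv, of j "- d"] by blast
      have eqn: "\<theta> - \<theta>' = (- d) * \<pi> powi j" using dd by (simp add: algebra_simps)
      show "ereal (of_int j) \<le> v (\<theta> - \<theta>')" unfolding eqn by (rule g)
    next
      assume le: "ereal (of_int j) \<le> v (\<theta> - \<theta>')"
      define d where "d = (\<theta> - \<theta>') / \<pi> powi j"
      have dd: "\<theta> - \<theta>' = d * \<pi> powi j" unfolding d_def using pin by simp
      have dR: "d \<in> val_ring v" using le ge_iff[OF nv] dd by simp
      have ndR: "- d \<in> val_ring v" using R_neg[OF nv dR] .
      have s1: "x' = x + \<kappa> (- d) * y" using dd by (intro shift) (simp add: algebra_simps)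
      have s2: "x = x' + \<kappa> d * y" using s1 by (simp add: k_neg[OF sh])
      have "R_subalg v \<kappa> {x', y} \<subseteq> R_subalg v \<kappa> {x, y}"
      proof (rule subalg_min)
        have "x' \<in> R_subalg v \<kappa> {x, y}" unfolding s1
          by (intro R_subalg.add R_subalg.mult R_subalg.scal R_subalg.gen ndR) auto
        moreover have "y \<in> R_subalg v \<kappa> {x, y}" by (rule R_subalg.gen) simp
        ultimately show "{x', y} \<subseteq> R_subalg v \<kappa> {x, y}" by simp
      qed
      moreover have "R_subalg v \<kappa> {x, y} \<subseteq> R_subalg v \<kappa> {x', y}"
      proof (rule subalg_min)
        have "x \<in> R_subalg v \<kappa> {x', y}" unfolding s2
          by (intro R_subalg.add R_subalg.mult R_subalg.scal R_subalg.gen dR) auto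
        moreover have "y \<in> R_subalg v \<kappa> {x', y}" by (rule R_subalg.gen) simp
        ultimately show "{x, y} \<subseteq> R_subalg v \<kappa> {x', y}" by simp
      qed
      ultimately show "H_ijt v \<kappa> t \<pi> i j \<theta> = H_ijt v \<kappa> t \<pi> i j \<theta>'" unfolding Hx Hx' by blast
    qed
  qed
  show ?thesis using P1 P2 P3 unfolding A_def \<Theta>_def by blast
qed


end
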